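(* Let $(X,\tau)$ be an extended locally convex space and let $\tau_F$ be its finest locally convex topology. A (finite-valued) seminorm on $X$ is continuous with respect to $\tau$ if and only if it is continuous with respect to $\tau_F$.
   Context: An extended seminorm on a vector space $X$ over $\mathbb{R}$ or $\mathbb{C}$ is a map $\rho:X\to[0,\infty]$ with $\rho(\alpha x)=|\alpha|\rho(x)$ and $\rho(x+y)\le\rho(x)+\rho(y)$. An extended locally convex space $(X,\tau)$ is a vector space with the topology induced by a family $\{\rho_i\}$ of extended seminorms (neighborhood base at $x_0$: $\{x:\max_{i\in J}\rho_i(x-x_0)<\varepsilon\}$, $J$ finite, $\varepsilon>0$). A locally convex topology is one induced in this way by finite-valued seminorms. The finest locally convex topology $\tau_F$ of $(X,\tau)$ is the locally convex topology on $X$ with $\tau_F\subseteq\tau$ such that every locally convex topology $\sigma\subseteq\tau$ on $X$ satisfies $\sigma\subseteq\tau_F$. *)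

theory Defs
  imports "HOL-Analysis.Analysis"
begin

text \<open>Vector space over a normed scalar field 'k (covers \<real> and \<complex>), given by a
  scalar multiplication satisfying the axioms of the locale vector_space.\<close>

definition ext_seminorm :: "('k::real_normed_field \<Rightarrow> 'a::ab_group_add \<Rightarrow> 'a) \<Rightarrow> ('a \<Rightarrow> ennreal) \<Rightarrow> bool" where
  "ext_seminorm smul \<rho> \<longleftrightarrow>
     (\<forall>\<alpha> x. \<rho> (smul \<alpha> x) = ennreal (norm \<alpha>) * \<rho> x) \<and>
     (\<forall>x y. \<rho> (x + y) \<le> \<rho> x + \<rho> y)"

definition seminorm :: "('k::real_normed_field \<Rightarrow> 'a::ab_group_add \<Rightarrow> 'a) \<Rightarrow> ('a \<Rightarrow> real) \<Rightarrow> bool" where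
  "seminorm smul p \<longleftrightarrow>
     (\<forall>x. 0 \<le> p x) \<and>
     (\<forall>\<alpha> x. p (smul \<alpha> x) = norm \<alpha> * p x) \<and>
     (\<forall>x y. p (x + y) \<le> p x + p y)"

definition induced_topology :: "('a::ab_group_add \<Rightarrow> ennreal) set \<Rightarrow> 'a topology" where
  "induced_topology R = topology (\<lambda>U. \<forall>x0\<in>U. \<exists>J \<subseteq> R. finite J \<and> (\<exists>\<epsilon>>0.
       {x. \<forall>\<rho>\<in>J. \<rho> (x - x0) < ennreal \<epsilon>} \<subseteq> U))"

definition ext_lc_topology :: "('k::real_normed_field \<Rightarrow> 'a::ab_group_add \<Rightarrow> 'a) \<Rightarrow> 'a topology \<Rightarrow> bool" where
  "ext_lc_topology smul \<tau> \<longleftrightarrow>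
     (\<exists>R. (\<forall>\<rho>\<in>R. ext_seminorm smul \<rho>) \<and> \<tau> = induced_topology R)"

definition lc_topology :: "('k::real_normed_field \<Rightarrow> 'a::ab_group_add \<Rightarrow> 'a) \<Rightarrow> 'a topology \<Rightarrow> bool" where
  "lc_topology smul \<sigma> \<longleftrightarrow>
     (\<exists>P. (\<forall>p\<in>P. seminorm smul p) \<and>
          \<sigma> = induced_topology ((\<lambda>p x. ennreal (p x)) ` P))"

definition coarser_topology :: "'a topology \<Rightarrow> 'a topology \<Rightarrow> bool" where
  "coarser_topology \<sigma> \<tau> \<longleftrightarrow> (\<forall>U. openin \<sigma> U \<longrightarrow> openin \<tau> U)"

definition finest_lc_topology :: "('k::real_normed_field \<Rightarrow> 'a::ab_group_add \<Rightarrow> 'a) \<Rightarrow> 'a topology \<Rightarrow> 'a topology \<Rightarrow> bool" where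
  "finest_lc_topology smul \<tau> \<tau>F \<longleftrightarrow>
     lc_topology smul \<tau>F \<and> coarser_topology \<tau>F \<tau> \<and>
     (\<forall>\<sigma>. lc_topology smul \<sigma> \<and> coarser_topology \<sigma> \<tau> \<longrightarrow> coarser_topology \<sigma> \<tau>F)"

end

theory Submission
  imports Defs
begin

lemma istop_induced:
  "istopology (\<lambda>U. \<forall>x0\<in>U. \<exists>J \<subseteq> R. finite J \<and> (\<exists>\<epsilon>>0.
       {x. \<forall>\<rho>\<in>J. \<rho> (x - x0) < ennreal \<epsilon>} \<subseteq> U))"
  unfolding istopology_def
proof (intro conjI allI impI)
  fix S T :: "'a set"
  assume S: "\<forall>x0\<in>S. \<exists>J \<subseteq> R. finite J \<and> (\<exists>\<epsilon>>0. {x. \<forall>\<rho>\<in>J. \<rho> (x - x0) < ennreal \<epsilon>} \<subseteq> S)"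
    and T: "\<forall>x0\<in>T. \<exists>J \<subseteq> R. finite J \<and> (\<exists>\<epsilon>>0. {x. \<forall>\<rho>\<in>J. \<rho> (x - x0) < ennreal \<epsilon>} \<subseteq> T)"
  show "\<forall>x0\<in>S \<inter> T. \<exists>J \<subseteq> R. finite J \<and> (\<exists>\<epsilon>>0. {x. \<forall>\<rho>\<in>J. \<rho> (x - x0) < ennreal \<epsilon>} \<subseteq> S \<inter> T)"
  proof
    fix x0 assume "x0 \<in> S \<inter> T"
    then have "x0 \<in> S" "x0 \<in> T" by auto
    obtain J1 where J1: "J1 \<subseteq> R" "finite J1" "\<exists>\<epsilon>>0. {x. \<forall>\<rho>\<in>J1. \<rho> (x - x0) < ennreal \<epsilon>} \<subseteq> S"
      using S \<open>x0 \<in> S\<close> by meson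
    obtain e1 where e1: "e1 > 0" "{x. \<forall>\<rho>\<in>J1. \<rho> (x - x0) < ennreal e1} \<subseteq> S"
      using J1(3) by meson
    obtain J2 where J2: "J2 \<subseteq> R" "finite J2" "\<exists>\<epsilon>>0. {x. \<forall>\<rho>\<in>J2. \<rho> (x - x0) < ennreal \<epsilon>} \<subseteq> T"
      using T \<open>x0 \<in> T\<close> by meson
    obtain e2 where e2: "e2 > 0" "{x. \<forall>\<rho>\<in>J2. \<rho> (x - x0) < ennreal e2} \<subseteq> T"
      using J2(3) by meson
    have m1: "ennreal (min e1 e2) \<le> ennreal e1" by (rule ennreal_leI[OF min.cobounded1])
    have m2: "ennreal (min e1 e2) \<le> ennreal e2" by (rule ennreal_leI[OF min.cobounded2])
    have "{x. \<forall>\<rho>\<in>J1 \<union> J2. \<rho> (x - x0) < ennreal (min e1 e2)} \<subseteq> S \<inter> T"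
    proof
      fix x assume "x \<in> {x. \<forall>\<rho>\<in>J1 \<union> J2. \<rho> (x - x0) < ennreal (min e1 e2)}"
      then have h: "\<forall>\<rho>\<in>J1 \<union> J2. \<rho> (x - x0) < ennreal (min e1 e2)" by simp
      have "\<forall>\<rho>\<in>J1. \<rho> (x - x0) < ennreal e1" using h m1 by (meson UnI1 order_less_le_trans)
      moreover have "\<forall>\<rho>\<in>J2. \<rho> (x - x0) < ennreal e2" using h m2 by (meson UnI2 order_less_le_trans)
      ultimately show "x \<in> S \<inter> T" using e1(2) e2(2) by blast
    qed
    moreover have "min e1 e2 > 0" using e1 e2 by simp
    ultimately show "\<exists>J \<subseteq> R. finite J \<and> (\<exists>\<epsilon>>0. {x. \<forall>\<rho>\<in>J. \<rho> (x - x0) < ennreal \<epsilon>} \<subseteq> S \<inter> T)"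
      using J1 J2 by (intro exI[of _ "J1 \<union> J2"]) blast
  qed
next
  fix K :: "'a set set"
  assume "\<forall>S\<in>K. \<forall>x0\<in>S. \<exists>J \<subseteq> R. finite J \<and> (\<exists>\<epsilon>>0. {x. \<forall>\<rho>\<in>J. \<rho> (x - x0) < ennreal \<epsilon>} \<subseteq> S)"
  then show "\<forall>x0\<in>\<Union>K. \<exists>J \<subseteq> R. finite J \<and> (\<exists>\<epsilon>>0. {x. \<forall>\<rho>\<in>J. \<rho> (x - x0) < ennreal \<epsilon>} \<subseteq> \<Union>K)"
    by (meson Union_upper UnionE order_trans)
qed

lemma openin_induced:
  "openin (induced_topology R) U \<longleftrightarrow> (\<forall>x0\<in>U. \<exists>J \<subseteq> R. finite J \<and> (\<exists>\<epsilon>>0.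
       {x. \<forall>\<rho>\<in>J. \<rho> (x - x0) < ennreal \<epsilon>} \<subseteq> U))"
  unfolding induced_topology_def using istop_induced[of R] by simp

lemma topspace_induced: "topspace (induced_topology R) = UNIV"
proof -
  have "openin (induced_topology R) UNIV"
    unfolding openin_induced by (auto intro!: exI[of _ "{}"] exI[of _ 1])
  then show ?thesis by (metis openin_subset top.extremum_unique)
qed

lemma lc_topspace: "lc_topology smul \<sigma> \<Longrightarrow> topspace \<sigma> = UNIV"
  unfolding lc_topology_def using topspace_induced by blast

lemma elc_topspace: "ext_lc_topology smul \<sigma> \<Longrightarrow> topspace \<sigma> = UNIV"
  unfolding ext_lc_topology_def using topspace_induced by blast

theorem theorem3p5:
  fixes smul :: "'k::real_normed_field \<Rightarrow> 'a::ab_group_add \<Rightarrow> 'a"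
    and \<tau> \<tau>F :: "'a topology" and p :: "'a \<Rightarrow> real"
  assumes "vector_space smul"
    and "ext_lc_topology smul \<tau>"
    and "finest_lc_topology smul \<tau> \<tau>F"
    and "seminorm smul p"
  shows "continuous_map \<tau> euclideanreal p \<longleftrightarrow> continuous_map \<tau>F euclideanreal p"
proof -
  interpret vs: vector_space smul by (rule assms(1))
  have tsp: "topspace \<tau> = UNIV" using elc_topspace[OF assms(2)] .
  have fl: "lc_topology smul \<tau>F" "coarser_topology \<tau>F \<tau>"
    "\<And>\<sigma>. lc_topology smul \<sigma> \<Longrightarrow> coarser_topology \<sigma> \<tau> \<Longrightarrow> coarser_topology \<sigma> \<tau>F"
    using assms(3) unfolding finest_lc_topology_def by blast+
  have tspF: "topspace \<tau>F = UNIV" using lc_topspace[OF fl(1)] .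
  have p0: "\<And>x. 0 \<le> p x" and pm: "\<And>a x. p (smul a x) = norm a * p x"
    and padd: "\<And>x y. p (x + y) \<le> p x + p y"
    using assms(4) unfolding seminorm_def by blast+
  have neg: "p (- x) = p x" for x
  proof -
    have "smul (-1) x = - x"
      using vs.scale_minus_left[of 1 x] vs.scale_one by simp
    then show ?thesis using pm[of "-1" x] by simp
  qed
  have lip: "\<bar>p x - p x0\<bar> \<le> p (x - x0)" for x x0
  proof -
    have "p x \<le> p (x - x0) + p x0" using padd[of "x - x0" x0] by simp
    moreover have "p x0 \<le> p (x0 - x) + p x" using padd[of "x0 - x" x] by simp
    moreover have "p (x0 - x) = p (x - x0)" using neg[of "x - x0"] by simp
    ultimately show ?thesis by linarith
  qed
  define \<sigma> where "\<sigma> = induced_topology ((\<lambda>q x. ennreal (q x)) ` {p})"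
  have lcs: "lc_topology smul \<sigma>"
    unfolding lc_topology_def \<sigma>_def using assms(4) by blast
  have opsig: "openin \<sigma> U \<longleftrightarrow> (\<forall>x0\<in>U. \<exists>\<epsilon>>0. {x. p (x - x0) < \<epsilon>} \<subseteq> U)" for U
  proof
    assume "openin \<sigma> U"
    then have h: "\<forall>x0\<in>U. \<exists>J \<subseteq> {\<lambda>x. ennreal (p x)}. finite J \<and> (\<exists>\<epsilon>>0.
       {x. \<forall>\<rho>\<in>J. \<rho> (x - x0) < ennreal \<epsilon>} \<subseteq> U)"
      unfolding \<sigma>_def openin_induced by simp
    show "\<forall>x0\<in>U. \<exists>\<epsilon>>0. {x. p (x - x0) < \<epsilon>} \<subseteq> U"
    proof
      fix x0 assume "x0 \<in> U"
      then obtain J e where J: "J \<subseteq> {\<lambda>x. ennreal (p x)}" "e > 0"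
        "{x. \<forall>\<rho>\<in>J. \<rho> (x - x0) < ennreal e} \<subseteq> U" using h by blast
      have "{x. p (x - x0) < e} \<subseteq> {x. \<forall>\<rho>\<in>J. \<rho> (x - x0) < ennreal e}"
        using J(1,2) p0 by (auto simp: ennreal_less_iff)
      then show "\<exists>\<epsilon>>0. {x. p (x - x0) < \<epsilon>} \<subseteq> U" using J by blast
    qed
  next
    assume h: "\<forall>x0\<in>U. \<exists>\<epsilon>>0. {x. p (x - x0) < \<epsilon>} \<subseteq> U"
    show "openin \<sigma> U"
      unfolding \<sigma>_def openin_induced
    proof
      fix x0 assume "x0 \<in> U"
      then obtain e where e: "e > 0" "{x. p (x - x0) < e} \<subseteq> U" using h by blast
      then show "\<exists>J \<subseteq> (\<lambda>q x. ennreal (q x)) ` {p}. finite J \<and> (\<exists>\<epsilon>>0.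
       {x. \<forall>\<rho>\<in>J. \<rho> (x - x0) < ennreal \<epsilon>} \<subseteq> U)"
        using p0 by (intro exI[of _ "{\<lambda>x. ennreal (p x)}"]) (auto simp: ennreal_less_iff)
    qed
  qed
  have tsig: "topspace \<sigma> = UNIV" using lc_topspace[OF lcs] .
  have pcont: "continuous_map \<sigma> euclideanreal p"
    unfolding continuous_map_def tsig
  proof (intro conjI allI impI)
    fix U :: "real set" assume "openin euclideanreal U"
    then have oU: "open U" by simp
    show "openin \<sigma> {x \<in> UNIV. p x \<in> U}"
      unfolding opsig
    proof
      fix x0 assume "x0 \<in> {x \<in> UNIV. p x \<in> U}"
      then obtain e where e: "e > 0" "ball (p x0) e \<subseteq> U" using oU open_contains_ball by blast
      have "{x. p (x - x0) < e} \<subseteq> {x \<in> UNIV. p x \<in> U}"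
      proof
        fix x assume "x \<in> {x. p (x - x0) < e}"
        then have "dist (p x0) (p x) < e" using lip[of x x0] by (simp add: dist_real_def)
        then show "x \<in> {x \<in> UNIV. p x \<in> U}" using e by auto
      qed
      then show "\<exists>\<epsilon>>0. {x. p (x - x0) < \<epsilon>} \<subseteq> {x \<in> UNIV. p x \<in> U}" using e by blast
    qed
  qed auto
  show ?thesis
  proof
    assume c: "continuous_map \<tau> euclideanreal p"
    obtain R where R: "\<tau> = induced_topology R" using assms(2) unfolding ext_lc_topology_def by blast
    have "coarser_topology \<sigma> \<tau>"
      unfolding coarser_topology_def
    proof (intro allI impI)
      fix U assume "openin \<sigma> U"
      then have hU: "\<forall>x0\<in>U. \<exists>\<epsilon>>0. {x. p (x - x0) < \<epsilon>} \<subseteq> U" using opsig by blast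
      show "openin \<tau> U"
        unfolding R openin_induced
      proof
        fix x0 assume "x0 \<in> U"
        then obtain e where e: "e > 0" "{x. p (x - x0) < e} \<subseteq> U" using hU by blast
        have "openin \<tau> {x \<in> topspace \<tau>. p x \<in> {..<e}}"
          using c unfolding continuous_map_def by (metis open_lessThan open_openin)
        then have "openin (induced_topology R) {x. p x < e}" using tsp R by simp
        moreover have "0 \<in> {x. p x < (e::real)}"
        proof -
          have "p 0 = 0" using pm[of 0 0] vs.scale_zero_left by simp
          then show ?thesis using e by simp
        qed
        ultimately obtain J d where J: "J \<subseteq> R" "finite J" "d > 0"
          "{x. \<forall>\<rho>\<in>J. \<rho> (x - 0) < ennreal d} \<subseteq> {x. p x < e}"
          unfolding openin_induced by blast
        have "{x. \<forall>\<rho>\<in>J. \<rho> (x - x0) < ennreal d} \<subseteq> U"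
        proof
          fix x assume "x \<in> {x. \<forall>\<rho>\<in>J. \<rho> (x - x0) < ennreal d}"
          then have "x - x0 \<in> {x. \<forall>\<rho>\<in>J. \<rho> (x - 0) < ennreal d}" by simp
          then have "p (x - x0) < e" using J(4) by blast
          then show "x \<in> U" using e by blast
        qed
        then show "\<exists>J \<subseteq> R. finite J \<and> (\<exists>\<epsilon>>0. {x. \<forall>\<rho>\<in>J. \<rho> (x - x0) < ennreal \<epsilon>} \<subseteq> U)"
          using J by blast
      qed
    qed
    then have cF: "coarser_topology \<sigma> \<tau>F" using fl(3)[OF lcs] by blast
    show "continuous_map \<tau>F euclideanreal p"
      using pcont cF unfolding continuous_map_def coarser_topology_def tsig tspF by blast
  next
    assume "continuous_map \<tau>F euclideanreal p"
    then show "continuous_map \<tau> euclideanreal p"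
      using fl(2) unfolding continuous_map_def coarser_topology_def tsp tspF by blast
  qed
qed

end
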